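(* Let $(M,\mathbf{p})$ be an oriented projective manifold of dimension $n+1$ equipped with a section $\mathbb{T}^A{}_B$ of the adjoint tractor bundle $\mathcal{A}$ which is parallel for the tractor connection. Then the curvature $R_{ab}{}^C{}_D\in\Gamma(\Lambda^2T^*M\otimes\mathcal{A})$ of the normal tractor connection satisfies $R_{ab}{}^C{}_D\,\mathbb{T}^D{}_C=0$.
   Context: A projective structure $\mathbf{p}$ on $M$ ($\dim M=n+1$) is a class of torsion-free connections related by $\widehat\nabla_a\xi^b=\nabla_a\xi^b+\Upsilon_a\xi^b+\delta^b{}_a\Upsilon_c\xi^c$. $\mathcal{E}(w)$ denotes the density bundle $((\Lambda^{n+1}TM)^{\otimes2})^{w/(2n+4)}$. The (standard) tractor bundle $\mathcal{T}$ is the dual of $J^1\mathcal{E}(1)$; a choice $\nabla\in\mathbf{p}$ splits $\mathcal{T}\cong TM(-1)\oplus\mathcal{E}(-1)$, and the normal tractor connection is $\nabla^{\mathcal{T}}_a(\nu^b,\rho)=(\nabla_a\nu^b+\rho\delta^b{}_a,\nabla_a\rho-\mathsf{P}_{ab}\nu^b)$ (independent of $\nabla$), where $\mathsf{P}_{ab}=\frac{1}{n(n+2)}[(n+1)\mathrm{Ric}_{ab}+\mathrm{Ric}_{ba}]$ is the projective Schouten tensor. The adjoint tractor bundle $\mathcal{A}=\mathfrak{sl}(\mathcal{T})$ consists of trace-free endomorphisms of $\mathcal{T}$, with the induced connection. The curvature of $\nabla^{\mathcal{T}}$ is a $2$-form with values in $\mathcal{A}$; in a splitting it is $R_{ab}{}^C{}_D=W_{ab}{}^c{}_dW^C{}_cZ_D{}^d-C_{abd}Z_D{}^dX^C$,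 with $W$ the projective Weyl tensor, $C_{abc}=\nabla_a\mathsf{P}_{bc}-\nabla_b\mathsf{P}_{ac}$ the projective Cotton tensor, $W^C{}_c$ the inclusion $TM(-1)\to\mathcal{T}$, $X^C$ the canonical tractor and $Z_D{}^d$ the projection $\mathcal{T}\to TM(-1)$. *)

theory Defs
  imports "HOL-Analysis.Analysis"
begin

text \<open>The manifold M of dimension n+1 is replaced by an open
  set U in real^'n with CARD('n) = n+1 (coordinates x^1..x^{n+1} indexed by 'n).
  A connection in the projective class is given by its Christoffel symbols
  Gam b a c = Gamma^b_{ac}. Tractor indices range over 'n option:
  Some b = the TM(-1) slot (coordinate frame), None = the E(-1) slot, all densities being
  trivialised by the coordinate volume form.\<close>

definition partial :: "'n::finite \<Rightarrow> (real^'n \<Rightarrow> real) \<Rightarrow> real^'n \<Rightarrow> real" where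
  "partial i f x = deriv (\<lambda>t. f (x + t *\<^sub>R axis i 1)) 0"

fun iterpd :: "'n::finite list \<Rightarrow> (real^'n \<Rightarrow> real) \<Rightarrow> real^'n \<Rightarrow> real" where
  "iterpd [] f = f"
| "iterpd (i # is) f = partial i (iterpd is f)"

definition smooth_fun_on :: "(real^'n::finite) set \<Rightarrow> (real^'n \<Rightarrow> real) \<Rightarrow> bool" where
  "smooth_fun_on U f \<longleftrightarrow>
     (\<forall>is. continuous_on U (iterpd is f) \<and> (\<forall>x\<in>U. iterpd is f differentiable (at x)))"

type_synonym 'n christoffel = "'n \<Rightarrow> 'n \<Rightarrow> 'n \<Rightarrow> real^'n \<Rightarrow> real"

definition dimn :: "'n::finite itself \<Rightarrow> real" where
  "dimn _ = real CARD('n) - 1"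

text \<open>Riemann curvature: (nabla_a nabla_b - nabla_b nabla_a) v^c = R_ab^c_d v^d.\<close>
definition riem :: "'n::finite christoffel \<Rightarrow> 'n \<Rightarrow> 'n \<Rightarrow> 'n \<Rightarrow> 'n \<Rightarrow> real^'n \<Rightarrow> real" where
  "riem Gam a b c d x =
     partial a (Gam c b d) x - partial b (Gam c a d) x
     + (\<Sum>e\<in>UNIV. Gam c a e x * Gam e b d x - Gam c b e x * Gam e a d x)"

definition ric :: "'n::finite christoffel \<Rightarrow> 'n \<Rightarrow> 'n \<Rightarrow> real^'n \<Rightarrow> real" where
  "ric Gam b d x = (\<Sum>a\<in>UNIV. riem Gam a b a d x)"

definition schouten :: "'n::finite christoffel \<Rightarrow> 'n \<Rightarrow> 'n \<Rightarrow> real^'n \<Rightarrow> real" where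
  "schouten Gam a b x =
     ((dimn TYPE('n) + 1) * ric Gam a b x + ric Gam b a x)
       / (dimn TYPE('n) * (dimn TYPE('n) + 2))"

definition trGam :: "'n::finite christoffel \<Rightarrow> 'n \<Rightarrow> real^'n \<Rightarrow> real" where
  "trGam Gam a x = (\<Sum>c\<in>UNIV. Gam c c a x)"

text \<open>Connection matrix of the normal tractor connection in the splitting and frame above:
  nabla_a s^C = partial_a s^C + tconn a C D s^D, i.e.
  nabla_a (nu^b, rho) = (nabla_a nu^b + rho delta^b_a, nabla_a rho - P_ab nu^b),
  with nabla on weight -1 densities: partial - trGam/(n+2).\<close>
definition tconn :: "'n::finite christoffel \<Rightarrow> 'n \<Rightarrow> 'n option \<Rightarrow> 'n option \<Rightarrow> real^'n \<Rightarrow> real" where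
  "tconn Gam a C D x =
     (case (C, D) of
        (Some b, Some c) \<Rightarrow> Gam b a c x - (if b = c then trGam Gam a x / (dimn TYPE('n) + 2) else 0)
      | (Some b, None) \<Rightarrow> (if b = a then 1 else 0)
      | (None, Some c) \<Rightarrow> - schouten Gam a c x
      | (None, None) \<Rightarrow> - trGam Gam a x / (dimn TYPE('n) + 2))"

text \<open>Curvature of the tractor connection: (nabla_a nabla_b - nabla_b nabla_a) s^C = R_ab^C_D s^D.\<close>
definition tcurv :: "'n::finite christoffel \<Rightarrow> 'n \<Rightarrow> 'n \<Rightarrow> 'n option \<Rightarrow> 'n option \<Rightarrow> real^'n \<Rightarrow> real" where
  "tcurv Gam a b C D x =
     partial a (tconn Gam b C D) x - partial b (tconn Gam a C D) x
     + (\<Sum>E\<in>UNIV. tconn Gam a C E x * tconn Gam b E D x - tconn Gam b C E x * tconn Gam a E D x)"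

definition parallel_adjoint ::
  "'n::finite christoffel \<Rightarrow> (real^'n) set \<Rightarrow> ('n option \<Rightarrow> 'n option \<Rightarrow> real^'n \<Rightarrow> real) \<Rightarrow> bool" where
  "parallel_adjoint Gam U T \<longleftrightarrow>
     (\<forall>C D. smooth_fun_on U (T C D)) \<and>
     (\<forall>x\<in>U. (\<Sum>C\<in>UNIV. T C C x) = 0) \<and>
     (\<forall>x\<in>U. \<forall>a C D. partial a (T C D) x
        + (\<Sum>E\<in>UNIV. tconn Gam a C E x * T E D x - T C E x * tconn Gam a E D x) = 0)"

end

theory Submission
  imports Defs
begin


lemma line_deriv:
  fixes f :: "real^'n::finite \<Rightarrow> real"
  assumes "(f has_derivative f') (at (a + s *\<^sub>R v))"
  shows "((\<lambda>t. f (a + t *\<^sub>R v)) has_real_derivative f' v) (at s)"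
proof -
  have h1: "((\<lambda>t. a + t *\<^sub>R v) has_derivative (\<lambda>t. t *\<^sub>R v)) (at s)"
    by (auto intro!: derivative_eq_intros)
  have "((f \<circ> (\<lambda>t. a + t *\<^sub>R v)) has_derivative (f' \<circ> (\<lambda>t. t *\<^sub>R v))) (at s)"
    by (rule diff_chain_at[OF h1]) (simp add: assms)
  moreover have "f' \<circ> (\<lambda>t. t *\<^sub>R v) = (\<lambda>t. f' v * t)"
    using has_derivative_linear[OF assms] by (auto simp: o_def linear_scale)
  ultimately show ?thesis by (simp add: has_field_derivative_def o_def)
qed

lemma partial_has:
  fixes f :: "real^'n::finite \<Rightarrow> real"
  assumes "(f has_derivative f') (at x)"
  shows "partial i f x = f' (axis i 1)"
  unfolding partial_def
  by (rule DERIV_imp_deriv, rule line_deriv) (simp add: assms)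

lemma partial_frechet:
  fixes f :: "real^'n::finite \<Rightarrow> real"
  assumes "f differentiable (at x)"
  shows "partial i f x = frechet_derivative f (at x) (axis i 1)"
  using assms frechet_derivative_works partial_has by (metis)

lemma partial_add:
  fixes f g :: "real^'n::finite \<Rightarrow> real"
  assumes "f differentiable (at x)" "g differentiable (at x)"
  shows "partial i (\<lambda>y. f y + g y) x = partial i f x + partial i g x"
proof -
  from assms obtain f' g' where "(f has_derivative f') (at x)" "(g has_derivative g') (at x)"
    by (auto simp: differentiable_def)
  then have "partial i (\<lambda>y. f y + g y) x = f' (axis i 1) + g' (axis i 1)" by (intro partial_has has_derivative_add)
  then show ?thesis by (simp add: partial_has[OF \<open>(f has_derivative f') (at x)\<close>] partial_has[OF \<open>(g has_derivative g') (at x)\<close>])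
qed

lemma partial_diff:
  fixes f g :: "real^'n::finite \<Rightarrow> real"
  assumes "f differentiable (at x)" "g differentiable (at x)"
  shows "partial i (\<lambda>y. f y - g y) x = partial i f x - partial i g x"
proof -
  from assms obtain f' g' where "(f has_derivative f') (at x)" "(g has_derivative g') (at x)"
    by (auto simp: differentiable_def)
  then have "partial i (\<lambda>y. f y - g y) x = f' (axis i 1) - g' (axis i 1)" by (intro partial_has has_derivative_diff)
  then show ?thesis by (simp add: partial_has[OF \<open>(f has_derivative f') (at x)\<close>] partial_has[OF \<open>(g has_derivative g') (at x)\<close>])
qed

lemma partial_mult:
  fixes f g :: "real^'n::finite \<Rightarrow> real"
  assumes "f differentiable (at x)" "g differentiable (at x)"
  shows "partial i (\<lambda>y. f y * g y) x = partial i f x * g x + f x * partial i g x"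
proof -
  from assms obtain f' g' where a: "(f has_derivative f') (at x)" "(g has_derivative g') (at x)"
    by (auto simp: differentiable_def)
  have "((\<lambda>y. f y * g y) has_derivative (\<lambda>h. f x * g' h + f' h * g x)) (at x)"
    using has_derivative_mult[OF a] .
  then have "partial i (\<lambda>y. f y * g y) x = f x * g' (axis i 1) + f' (axis i 1) * g x" by (rule partial_has)
  then show ?thesis by (simp add: partial_has[OF a(1)] partial_has[OF a(2)])
qed

lemma partial_cmult:
  fixes f :: "real^'n::finite \<Rightarrow> real"
  assumes "f differentiable (at x)"
  shows "partial i (\<lambda>y. c * f y) x = c * partial i f x"
proof -
  from assms obtain f' where a: "(f has_derivative f') (at x)"
    by (auto simp: differentiable_def)
  have "((\<lambda>y. c * f y) has_derivative (\<lambda>h. c * f' h)) (at x)"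
    using a by (auto intro!: derivative_eq_intros)
  then have "partial i (\<lambda>y. c * f y) x = c * f' (axis i 1)" by (rule partial_has)
  then show ?thesis by (simp add: partial_has[OF a])
qed

lemma partial_const: "partial i (\<lambda>y. c) x = 0"
  by (rule partial_has) simp

lemma partial_sum:
  fixes f :: "'b \<Rightarrow> real^'n::finite \<Rightarrow> real"
  assumes "\<And>e. e \<in> S \<Longrightarrow> f e differentiable (at x)"
  shows "partial i (\<lambda>y. \<Sum>e\<in>S. f e y) x = (\<Sum>e\<in>S. partial i (f e) x)"
proof -
  have "\<forall>e\<in>S. \<exists>f'. (f e has_derivative f') (at x)" using assms by (auto simp: differentiable_def)
  then obtain F where F: "\<And>e. e \<in> S \<Longrightarrow> (f e has_derivative F e) (at x)" by metis
  have "((\<lambda>y. \<Sum>e\<in>S. f e y) has_derivative (\<lambda>h. \<Sum>e\<in>S. F e h)) (at x)"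
    using F by (auto intro!: has_derivative_sum)
  then have "partial i (\<lambda>y. \<Sum>e\<in>S. f e y) x = (\<Sum>e\<in>S. F e (axis i 1))" by (rule partial_has)
  also have "\<dots> = (\<Sum>e\<in>S. partial i (f e) x)"
    by (rule sum.cong) (auto simp: partial_has[OF F])
  finally show ?thesis .
qed

lemma partial_local:
  fixes f g :: "real^'n::finite \<Rightarrow> real"
  assumes "open U" "x \<in> U" "\<And>y. y \<in> U \<Longrightarrow> f y = g y"
  shows "partial i f x = partial i g x"
proof -
  have c: "continuous (at 0) (\<lambda>t::real. x + t *\<^sub>R axis i (1::real))"
    by (intro continuous_intros)
  have "((\<lambda>t::real. x + t *\<^sub>R axis i (1::real)) \<longlongrightarrow> x) (nhds 0)"
    using c by (simp add: tendsto_nhds_iff isCont_def)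
  then have "\<forall>\<^sub>F t in nhds 0. x + t *\<^sub>R axis i 1 \<in> U"
    using assms(1,2) by (rule topological_tendstoD)
  then have ev: "\<forall>\<^sub>F t in nhds 0. f (x + t *\<^sub>R axis i 1) = g (x + t *\<^sub>R axis i 1)"
    by eventually_elim (simp add: assms(3))
  have "(\<lambda>D. DERIV (\<lambda>t. f (x + t *\<^sub>R axis i 1)) 0 :> D) = (\<lambda>D. DERIV (\<lambda>t. g (x + t *\<^sub>R axis i 1)) 0 :> D)"
    using DERIV_cong_ev[OF refl ev refl] by auto
  then show ?thesis unfolding partial_def deriv_def by simp
qed

lemma differentiable_local:
  fixes f g :: "real^'n::finite \<Rightarrow> real"
  assumes "open U" "x \<in> U" "\<And>y. y \<in> U \<Longrightarrow> f y = g y" "g differentiable (at x)"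
  shows "f differentiable (at x)"
proof -
  from assms(4) obtain g' where "(g has_derivative g') (at x)" by (auto simp: differentiable_def)
  then have "(f has_derivative g') (at x)"
    by (rule has_derivative_transform_within_open[OF _ assms(1,2)]) (simp add: assms(3))
  then show ?thesis by (auto simp: differentiable_def)
qed




lemma norm_two_axes:
  "norm (s *\<^sub>R axis i (1::real) + t *\<^sub>R axis j (1::real) :: real^'n::finite) \<le> \<bar>s\<bar> + \<bar>t\<bar>"
proof -
  have "norm (s *\<^sub>R axis i (1::real) + t *\<^sub>R axis j (1::real) :: real^'n::finite)
     \<le> norm (s *\<^sub>R axis i (1::real) :: real^'n) + norm (t *\<^sub>R axis j (1::real) :: real^'n)"
    by (rule norm_triangle_ineq)
  also have "\<dots> = \<bar>s\<bar> + \<bar>t\<bar>" by simp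
  finally show ?thesis .
qed

lemma deriv_line_at:
  fixes f :: "real^'n::finite \<Rightarrow> real"
  assumes "f differentiable (at (a + s *\<^sub>R axis i 1))"
  shows "((\<lambda>t. f (a + t *\<^sub>R axis i 1)) has_real_derivative partial i f (a + s *\<^sub>R axis i 1)) (at s)"
  using line_deriv[OF frechet_derivative_works[THEN iffD1, OF assms]] partial_frechet[OF assms]
  by simp

lemma mixed_mvt:
  fixes f :: "real^'n::finite \<Rightarrow> real"
  assumes U: "ball x r \<subseteq> U" and h: "0 < h" "2 * h < r"
    and d0: "\<forall>y\<in>U. f differentiable (at y)"
    and d1: "\<forall>y\<in>U. partial i f differentiable (at y)"
  shows "\<exists>p. dist p x < 2 * h \<and>
     f (x + h *\<^sub>R axis j 1 + h *\<^sub>R axis i 1) - f (x + h *\<^sub>R axis i 1) - f (x + h *\<^sub>R axis j 1) + f x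
       = h * (h * partial j (partial i f) p)"
proof -
  let ?ei = "axis i (1::real) :: real^'n" and ?ej = "axis j (1::real) :: real^'n"
  have inU: "x + s *\<^sub>R ?ei + t *\<^sub>R ?ej \<in> U" if "0 \<le> s" "s \<le> h" "0 \<le> t" "t \<le> h" for s t
  proof -
    have "norm (s *\<^sub>R ?ei + t *\<^sub>R ?ej) \<le> \<bar>s\<bar> + \<bar>t\<bar>" by (rule norm_two_axes)
    then have "dist (x + s *\<^sub>R ?ei + t *\<^sub>R ?ej) x < r" using that h
      by (simp add: dist_norm add.assoc)
    then show ?thesis using U by (auto simp: dist_commute)
  qed
  define \<phi> where "\<phi> s = f ((x + h *\<^sub>R ?ej) + s *\<^sub>R ?ei) - f (x + s *\<^sub>R ?ei)" for s
  have "DERIV \<phi> s :> partial i f ((x + h *\<^sub>R ?ej) + s *\<^sub>R ?ei) - partial i f (x + s *\<^sub>R ?ei)"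
    if "0 \<le> s" "s \<le> h" for s
  proof -
    have m1: "(x + h *\<^sub>R ?ej) + s *\<^sub>R ?ei \<in> U" using inU[of s h] that h by (simp add: add_ac)
    have m2: "x + s *\<^sub>R ?ei \<in> U" using inU[of s 0] that h by simp
    show ?thesis unfolding \<phi>_def
      by (intro DERIV_diff deriv_line_at) (use m1 m2 d0 in auto)
  qed
  from MVT2[OF h(1), of \<phi>, OF this] obtain \<xi> where xi: "0 < \<xi>" "\<xi> < h"
    and e1: "\<phi> h - \<phi> 0 = (h - 0) * (partial i f ((x + h *\<^sub>R ?ej) + \<xi> *\<^sub>R ?ei) - partial i f (x + \<xi> *\<^sub>R ?ei))"
    by blast
  define \<psi> where "\<psi> t = partial i f ((x + \<xi> *\<^sub>R ?ei) + t *\<^sub>R ?ej)" for t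
  have "DERIV \<psi> t :> partial j (partial i f) ((x + \<xi> *\<^sub>R ?ei) + t *\<^sub>R ?ej)"
    if "0 \<le> t" "t \<le> h" for t
  proof -
    have m1: "(x + \<xi> *\<^sub>R ?ei) + t *\<^sub>R ?ej \<in> U" using inU[of \<xi> t] that xi by simp
    show ?thesis unfolding \<psi>_def
      by (intro deriv_line_at) (use m1 d1 in auto)
  qed
  from MVT2[OF h(1), of \<psi>, OF this] obtain \<eta> where eta: "0 < \<eta>" "\<eta> < h"
    and e2: "\<psi> h - \<psi> 0 = (h - 0) * partial j (partial i f) ((x + \<xi> *\<^sub>R ?ei) + \<eta> *\<^sub>R ?ej)"
    by blast
  define p where "p = (x + \<xi> *\<^sub>R ?ei) + \<eta> *\<^sub>R ?ej"
  have "norm (\<xi> *\<^sub>R ?ei + \<eta> *\<^sub>R ?ej) \<le> \<bar>\<xi>\<bar> + \<bar>\<eta>\<bar>" by (rule norm_two_axes)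
  then have dp: "dist p x < 2 * h" using xi eta unfolding p_def by (simp add: dist_norm add.assoc)
  have "\<psi> h = partial i f ((x + h *\<^sub>R ?ej) + \<xi> *\<^sub>R ?ei)" unfolding \<psi>_def by (simp add: add_ac)
  moreover have "\<psi> 0 = partial i f (x + \<xi> *\<^sub>R ?ei)" unfolding \<psi>_def by simp
  ultimately have "\<phi> h - \<phi> 0 = h * (h * partial j (partial i f) p)"
    using e1 e2 unfolding p_def by simp
  then have "f (x + h *\<^sub>R ?ej + h *\<^sub>R ?ei) - f (x + h *\<^sub>R ?ei) - f (x + h *\<^sub>R ?ej) + f x
       = h * (h * partial j (partial i f) p)"
    unfolding \<phi>_def by simp
  then show ?thesis using dp by blast
qed

lemma abs_aux:
  fixes a b c d :: real
  assumes "\<bar>c - a\<bar> < \<bar>a - b\<bar> / 2" "\<bar>d - b\<bar> < \<bar>a - b\<bar> / 2" "c = d"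
  shows False
  using assms by (auto simp: abs_if split: if_splits)

lemma schwarz:
  fixes f :: "real^'n::finite \<Rightarrow> real"
  assumes U: "open U" "x \<in> U"
    and d0: "\<forall>y\<in>U. f differentiable (at y)"
    and di: "\<forall>y\<in>U. partial i f differentiable (at y)"
    and dj: "\<forall>y\<in>U. partial j f differentiable (at y)"
    and c1: "continuous_on U (partial j (partial i f))"
    and c2: "continuous_on U (partial i (partial j f))"
  shows "partial j (partial i f) x = partial i (partial j f) x"
proof (rule ccontr)
  let ?g1 = "partial j (partial i f)" and ?g2 = "partial i (partial j f)"
  assume ne: "?g1 x \<noteq> ?g2 x"
  define \<epsilon> where "\<epsilon> = \<bar>?g1 x - ?g2 x\<bar> / 2"
  have ep: "\<epsilon> > 0" using ne by (simp add: \<epsilon>_def)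
  have "isCont ?g1 x" using c1 U continuous_on_eq_continuous_at by blast
  then obtain d1 where d1: "d1 > 0" "\<And>y. dist y x < d1 \<Longrightarrow> dist (?g1 y) (?g1 x) < \<epsilon>"
    using ep continuous_at_eps_delta by metis
  have "isCont ?g2 x" using c2 U continuous_on_eq_continuous_at by blast
  then obtain d2 where d2: "d2 > 0" "\<And>y. dist y x < d2 \<Longrightarrow> dist (?g2 y) (?g2 x) < \<epsilon>"
    using ep continuous_at_eps_delta by metis
  obtain r where r: "r > 0" "ball x r \<subseteq> U" using U open_contains_ball by blast
  define h where "h = min r (min d1 d2) / 4"
  have h: "0 < h" "2 * h < r" "2 * h < d1" "2 * h < d2" using r d1 d2 by (auto simp: h_def)
  obtain p where p: "dist p x < 2 * h"
    "f (x + h *\<^sub>R axis j 1 + h *\<^sub>R axis i 1) - f (x + h *\<^sub>R axis i 1) - f (x + h *\<^sub>R axis j 1) + f x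
       = h * (h * ?g1 p)"
    using mixed_mvt[OF r(2) h(1,2) d0 di, of j] by blast
  obtain q where q: "dist q x < 2 * h"
    "f (x + h *\<^sub>R axis i 1 + h *\<^sub>R axis j 1) - f (x + h *\<^sub>R axis j 1) - f (x + h *\<^sub>R axis i 1) + f x
       = h * (h * ?g2 q)"
    using mixed_mvt[OF r(2) h(1,2) d0 dj, of i] by blast
  have "x + h *\<^sub>R axis i 1 + h *\<^sub>R axis j 1 = x + h *\<^sub>R axis j 1 + h *\<^sub>R axis i (1::real)"
    by (simp add: add_ac)
  then have "h * (h * ?g1 p) = h * (h * ?g2 q)" using p(2) q(2) by (simp add: algebra_simps)
  then have eq: "?g1 p = ?g2 q" using h(1) by simp
  have "dist (?g1 p) (?g1 x) < \<epsilon>" using d1(2) p(1) h by simp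
  moreover have "dist (?g2 q) (?g2 x) < \<epsilon>" using d2(2) q(1) h by simp
  ultimately show False using eq abs_aux unfolding \<epsilon>_def dist_real_def by blast
qed




definition dU :: "(real^'n::finite) set \<Rightarrow> (real^'n \<Rightarrow> real) \<Rightarrow> bool" where
  "dU U f \<longleftrightarrow> (\<forall>x\<in>U. f differentiable (at x))"

definition c2 :: "(real^'n::finite) set \<Rightarrow> (real^'n \<Rightarrow> real) \<Rightarrow> bool" where
  "c2 U f \<longleftrightarrow> dU U f \<and> (\<forall>i. dU U (partial i f)) \<and>
     (\<forall>i j. \<forall>x\<in>U. partial i (partial j f) x = partial j (partial i f) x)"

lemma iterpd_snoc: "iterpd (is @ [i]) f = iterpd is (partial i f)"
  by (induction "is") auto

lemma smooth_partial: "smooth_fun_on U f \<Longrightarrow> smooth_fun_on U (partial i f)"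
  unfolding smooth_fun_on_def by (metis iterpd_snoc)

lemma smooth_dU: "smooth_fun_on U f \<Longrightarrow> dU U f"
  unfolding smooth_fun_on_def dU_def by (metis iterpd.simps(1))

lemma smooth_c2:
  assumes "open U" "smooth_fun_on U f" shows "c2 U f"
proof -
  have d0: "dU U f" using assms(2) by (rule smooth_dU)
  have d1: "dU U (partial i f)" for i using smooth_dU[OF smooth_partial[OF assms(2)]] .
  have cc: "continuous_on U (partial i (partial j f))" for i j
    using assms(2) unfolding smooth_fun_on_def by (metis iterpd.simps)
  show ?thesis unfolding c2_def
    using d0 d1 cc schwarz[OF assms(1)] unfolding dU_def by blast
qed

lemma dU_add: "dU U f \<Longrightarrow> dU U g \<Longrightarrow> dU U (\<lambda>x. f x + g x)"
  unfolding dU_def by auto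
lemma dU_diff: "dU U f \<Longrightarrow> dU U g \<Longrightarrow> dU U (\<lambda>x. f x - g x)"
  unfolding dU_def by auto
lemma dU_mult: "dU U f \<Longrightarrow> dU U g \<Longrightarrow> dU U (\<lambda>x. f x * g x)"
  unfolding dU_def by auto
lemma dU_const: "dU U (\<lambda>x. c)"
  unfolding dU_def by auto
lemma dU_sum: "(\<And>e. e \<in> S \<Longrightarrow> dU U (f e)) \<Longrightarrow> dU U (\<lambda>x. \<Sum>e\<in>S. f e x)"
  unfolding dU_def by (cases "finite S") (auto intro!: differentiable_sum)

lemma dU_local:
  assumes "open U" "\<And>y. y \<in> U \<Longrightarrow> f y = g y" "dU U g" shows "dU U f"
  using assms differentiable_local unfolding dU_def by metis

lemma c2_dU: "c2 U f \<Longrightarrow> dU U f" by (simp add: c2_def)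
lemma c2_dU_partial: "c2 U f \<Longrightarrow> dU U (partial i f)" by (simp add: c2_def)

lemma partial_const_fun: "partial i (\<lambda>y. c) = (\<lambda>y. 0)"
  by (rule ext) (rule partial_const)

lemma c2_const: "c2 U (\<lambda>x. c)"
  unfolding c2_def by (simp add: partial_const_fun dU_const)

lemma c2_add:
  assumes U: "open U" and f: "c2 U f" and g: "c2 U g"
  shows "c2 U (\<lambda>x. f x + g x)"
proof -
  have df: "f differentiable (at y)" "g differentiable (at y)" if "y \<in> U" for y
    using f g that by (auto simp: c2_def dU_def)
  have dfi: "partial i f differentiable (at y)" "partial i g differentiable (at y)" if "y \<in> U" for i y
    using f g that by (auto simp: c2_def dU_def)
  have eq: "partial i (\<lambda>x. f x + g x) y = partial i f y + partial i g y" if "y \<in> U" for i y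
    using partial_add df that by blast
  have d1: "dU U (partial i (\<lambda>x. f x + g x))" for i
    by (rule dU_local[OF U eq]) (use f g in \<open>auto simp: c2_def intro!: dU_add\<close>)
  have sw: "partial i (partial j (\<lambda>x. f x + g x)) x = partial i (partial j f) x + partial i (partial j g) x"
    if "x \<in> U" for i j x
  proof -
    have "partial i (partial j (\<lambda>x. f x + g x)) x = partial i (\<lambda>y. partial j f y + partial j g y) x"
      by (rule partial_local[OF U that]) (simp add: eq)
    also have "\<dots> = partial i (partial j f) x + partial i (partial j g) x"
      by (rule partial_add) (use dfi that in auto)
    finally show ?thesis .
  qed
  show ?thesis unfolding c2_def
  proof (intro conjI allI ballI)
    show "dU U (\<lambda>x. f x + g x)" using f g by (auto simp: c2_def intro: dU_add)
    show "dU U (partial i (\<lambda>x. f x + g x))" for i by (rule d1)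
    show "partial i (partial j (\<lambda>x. f x + g x)) x = partial j (partial i (\<lambda>x. f x + g x)) x"
      if "x \<in> U" for i j x
      using sw[OF that, of i j] sw[OF that, of j i] f g that by (simp add: c2_def)
  qed
qed

lemma c2_diff:
  assumes U: "open U" and f: "c2 U f" and g: "c2 U g"
  shows "c2 U (\<lambda>x. f x - g x)"
proof -
  have df: "f differentiable (at y)" "g differentiable (at y)" if "y \<in> U" for y
    using f g that by (auto simp: c2_def dU_def)
  have dfi: "partial i f differentiable (at y)" "partial i g differentiable (at y)" if "y \<in> U" for i y
    using f g that by (auto simp: c2_def dU_def)
  have eq: "partial i (\<lambda>x. f x - g x) y = partial i f y - partial i g y" if "y \<in> U" for i y
    using partial_diff df that by blast
  have d1: "dU U (partial i (\<lambda>x. f x - g x))" for i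
    by (rule dU_local[OF U eq]) (use f g in \<open>auto simp: c2_def intro!: dU_diff\<close>)
  have sw: "partial i (partial j (\<lambda>x. f x - g x)) x = partial i (partial j f) x - partial i (partial j g) x"
    if "x \<in> U" for i j x
  proof -
    have "partial i (partial j (\<lambda>x. f x - g x)) x = partial i (\<lambda>y. partial j f y - partial j g y) x"
      by (rule partial_local[OF U that]) (simp add: eq)
    also have "\<dots> = partial i (partial j f) x - partial i (partial j g) x"
      by (rule partial_diff) (use dfi that in auto)
    finally show ?thesis .
  qed
  show ?thesis unfolding c2_def
  proof (intro conjI allI ballI)
    show "dU U (\<lambda>x. f x - g x)" using f g by (auto simp: c2_def intro: dU_diff)
    show "dU U (partial i (\<lambda>x. f x - g x))" for i by (rule d1)
    show "partial i (partial j (\<lambda>x. f x - g x)) x = partial j (partial i (\<lambda>x. f x - g x)) x"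
      if "x \<in> U" for i j x
      using sw[OF that, of i j] sw[OF that, of j i] f g that by (simp add: c2_def)
  qed
qed

lemma c2_mult:
  assumes U: "open U" and f: "c2 U f" and g: "c2 U g"
  shows "c2 U (\<lambda>x. f x * g x)"
proof -
  have df: "f differentiable (at y)" "g differentiable (at y)" if "y \<in> U" for y
    using f g that by (auto simp: c2_def dU_def)
  have dfi: "partial i f differentiable (at y)" "partial i g differentiable (at y)" if "y \<in> U" for i y
    using f g that by (auto simp: c2_def dU_def)
  have eq: "partial i (\<lambda>x. f x * g x) y = partial i f y * g y + f y * partial i g y" if "y \<in> U" for i y
    using partial_mult df that by blast
  have d1: "dU U (partial i (\<lambda>x. f x * g x))" for i
    by (rule dU_local[OF U eq]) (use f g in \<open>auto simp: c2_def intro!: dU_add dU_mult\<close>)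
  have sw: "partial i (partial j (\<lambda>x. f x * g x)) x =
     partial i (partial j f) x * g x + partial j f x * partial i g x
     + (partial i f x * partial j g x + f x * partial i (partial j g) x)"
    if "x \<in> U" for i j x
  proof -
    have "partial i (partial j (\<lambda>x. f x * g x)) x = partial i (\<lambda>y. partial j f y * g y + f y * partial j g y) x"
      by (rule partial_local[OF U that]) (simp add: eq)
    also have "\<dots> = partial i (\<lambda>y. partial j f y * g y) x + partial i (\<lambda>y. f y * partial j g y) x"
      by (rule partial_add) (use dfi df that in auto)
    also have "\<dots> = partial i (partial j f) x * g x + partial j f x * partial i g x
     + (partial i f x * partial j g x + f x * partial i (partial j g) x)"
      by (subst partial_mult, use dfi df that in auto)+
    finally show ?thesis .
  qed
  show ?thesis unfolding c2_def
  proof (intro conjI allI ballI)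
    show "dU U (\<lambda>x. f x * g x)" using f g by (auto simp: c2_def intro: dU_mult)
    show "dU U (partial i (\<lambda>x. f x * g x))" for i by (rule d1)
    show "partial i (partial j (\<lambda>x. f x * g x)) x = partial j (partial i (\<lambda>x. f x * g x)) x"
      if "x \<in> U" for i j x
      using sw[OF that, of i j] sw[OF that, of j i] f g that by (simp add: c2_def)
  qed
qed

lemma c2_cmult: "open U \<Longrightarrow> c2 U f \<Longrightarrow> c2 U (\<lambda>x. c * f x)"
  using c2_mult[OF _ c2_const] by blast

lemma c2_minus: "open U \<Longrightarrow> c2 U f \<Longrightarrow> c2 U (\<lambda>x. - f x)"
  using c2_cmult[of U f "-1"] by simp

lemma c2_divc: "open U \<Longrightarrow> c2 U f \<Longrightarrow> c2 U (\<lambda>x. f x / c)"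
  using c2_cmult[of U f "1/c"] by simp

lemma c2_sum:
  assumes "open U" "\<And>e. e \<in> S \<Longrightarrow> c2 U (f e)"
  shows "c2 U (\<lambda>x. \<Sum>e\<in>S. f e x)"
proof (cases "finite S")
  case True
  then show ?thesis using assms(2)
  proof (induction S rule: finite_induct)
    case empty then show ?case by (simp add: c2_const)
  next
    case (insert a F)
    then show ?case by (simp add: c2_add[OF assms(1)])
  qed
next
  case False then show ?thesis by (simp add: c2_const)
qed

lemma c2_if: "c2 U f \<Longrightarrow> c2 U g \<Longrightarrow> c2 U (\<lambda>x. if P then f x else g x)"
  by (cases P) auto

lemma partial_divc:
  fixes f :: "real^'n::finite \<Rightarrow> real"
  assumes "f differentiable (at x)"
  shows "partial i (\<lambda>y. f y / c) x = partial i f x / c"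
  using partial_cmult[OF assms, of i "1/c"] by simp

lemma partial_minus:
  fixes f :: "real^'n::finite \<Rightarrow> real"
  assumes "f differentiable (at x)"
  shows "partial i (\<lambda>y. - f y) x = - partial i f x"
  using partial_cmult[OF assms, of i "-1"] by simp




lemma sum_option: "(\<Sum>E\<in>(UNIV::'a::finite option set). f E) = f None + (\<Sum>e\<in>UNIV. f (Some e))"
proof -
  have "(\<Sum>E\<in>(UNIV::'a option set). f E) = (\<Sum>E\<in>insert None (range Some). f E)"
    by (simp add: UNIV_option_conv)
  also have "\<dots> = f None + (\<Sum>E\<in>range Some. f E)" by (subst sum.insert) auto
  also have "(\<Sum>E\<in>range Some. f E) = (\<Sum>e\<in>UNIV. f (Some e))"
    by (subst sum.reindex) auto
  finally show ?thesis .
qed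

lemma tconn_SS: "tconn (Gam :: 'n::finite christoffel) a (Some b) (Some c) x = Gam b a c x - (if b = c then trGam Gam a x / (dimn TYPE('n) + 2) else 0)"
  by (simp add: tconn_def)
lemma tconn_SN: "tconn Gam a (Some b) None x = (if b = a then 1 else 0)"
  by (simp add: tconn_def)
lemma tconn_NS: "tconn (Gam :: 'n::finite christoffel) a None (Some c) x = - schouten Gam a c x"
  by (simp add: tconn_def)
lemma tconn_NN: "tconn (Gam :: 'n::finite christoffel) a None None x = - (trGam Gam a x / (dimn TYPE('n) + 2))"
  by (simp add: tconn_def)

lemma tconn_SN_fun: "tconn Gam a (Some b) None = (\<lambda>x. if b = a then 1 else 0)"
  by (rule ext) (simp add: tconn_def)
lemma tconn_SS_fun: "tconn (Gam :: 'n::finite christoffel) a (Some b) (Some c) = (\<lambda>x. Gam b a c x - (if b = c then trGam Gam a x / (dimn TYPE('n) + 2) else 0))"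
  by (rule ext) (simp add: tconn_def)
lemma tconn_NS_fun: "tconn (Gam :: 'n::finite christoffel) a None (Some c) = (\<lambda>x. - schouten Gam a c x)"
  by (rule ext) (simp add: tconn_def)
lemma tconn_NN_fun: "tconn (Gam :: 'n::finite christoffel) a None None = (\<lambda>x. - (trGam Gam a x / (dimn TYPE('n) + 2)))"
  by (rule ext) (simp add: tconn_def)

lemma if01_mult: "(if P then 1 else 0) * (y::real) = (if P then y else 0)"
  "y * (if P then 1 else 0) = (if P then y else 0)" by auto

lemma trGam_fun: "trGam Gam a = (\<lambda>x. \<Sum>c\<in>UNIV. Gam c c a x)"
  by (rule ext) (simp add: trGam_def)
lemma riem_fun: "riem Gam a b c d = (\<lambda>x. partial a (Gam c b d) x - partial b (Gam c a d) x
     + (\<Sum>e\<in>UNIV. Gam c a e x * Gam e b d x - Gam c b e x * Gam e a d x))"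
  by (rule ext) (simp add: riem_def)
lemma ric_fun: "ric Gam b d = (\<lambda>x. \<Sum>a\<in>UNIV. riem Gam a b a d x)"
  by (rule ext) (simp add: ric_def)
lemma schouten_fun: "schouten (Gam :: 'n::finite christoffel) a b = (\<lambda>x. ((dimn TYPE('n) + 1) * ric Gam a b x + ric Gam b a x)
       / (dimn TYPE('n) * (dimn TYPE('n) + 2)))"
  by (rule ext) (simp add: schouten_def)
lemma tcurv_fun: "tcurv Gam a b C D = (\<lambda>x. partial a (tconn Gam b C D) x - partial b (tconn Gam a C D) x
     + (\<Sum>E\<in>UNIV. tconn Gam a C E x * tconn Gam b E D x - tconn Gam b C E x * tconn Gam a E D x))"
  by (rule ext) (simp add: tcurv_def)

locale proj =
  fixes U :: "(real^'n::finite) set" and Gam :: "'n christoffel"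
    and T :: "'n option \<Rightarrow> 'n option \<Rightarrow> real^'n \<Rightarrow> real"
  assumes card2: "CARD('n) \<ge> 2"
    and opn: "open U"
    and smG: "\<forall>a b c. smooth_fun_on U (Gam a b c)"
    and symG: "\<forall>a b c. \<forall>x\<in>U. Gam a b c x = Gam a c b x"
    and par: "parallel_adjoint Gam U T"
begin



lemma nn_ge1: "dimn TYPE('n) \<ge> 1" using card2 by (simp add: dimn_def)
lemma nn_ne0: "dimn TYPE('n) \<noteq> 0" using nn_ge1 by simp
lemma nn2_ne0: "dimn TYPE('n) + 2 \<noteq> 0" using nn_ge1 by simp
lemma card_nn: "real CARD('n) = dimn TYPE('n) + 1" by (simp add: dimn_def)

lemma c2G: "c2 U (Gam a b c)" using smooth_c2[OF opn] smG by blast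
lemma c2pG: "c2 U (partial i (Gam a b c))" using smooth_c2[OF opn smooth_partial] smG by blast
lemma dG: "x \<in> U \<Longrightarrow> Gam a b c differentiable (at x)" using c2G by (auto simp: c2_def dU_def)
lemma dpG: "x \<in> U \<Longrightarrow> partial i (Gam a b c) differentiable (at x)" using c2G by (auto simp: c2_def dU_def)

lemma c2tr: "c2 U (trGam Gam a)"
  unfolding trGam_fun by (intro c2_sum opn c2G)
lemma c2riem: "c2 U (riem Gam a b c d)"
  unfolding riem_fun by (intro c2_add c2_diff c2_sum c2_mult opn c2G c2pG)
lemma c2ric: "c2 U (ric Gam a b)"
  unfolding ric_fun by (intro c2_sum opn c2riem)
lemma c2sch: "c2 U (schouten Gam a b)"
  unfolding schouten_fun by (intro c2_divc c2_add c2_cmult opn c2ric)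
lemma c2A_NN: "c2 U (tconn Gam a None None)"
  unfolding tconn_NN_fun by (intro c2_minus c2_divc opn c2tr)
lemma c2A_NS: "c2 U (tconn Gam a None (Some c))"
  unfolding tconn_NS_fun by (intro c2_minus opn c2sch)
lemma c2A_SN: "c2 U (tconn Gam a (Some b) None)"
  unfolding tconn_SN_fun by (intro c2_if c2_const)
lemma c2A_SS: "c2 U (tconn Gam a (Some b) (Some c))"
  unfolding tconn_SS_fun by (intro c2_diff c2_if c2_divc opn c2G c2tr c2_const)
lemma c2A: "c2 U (tconn Gam a C D)"
  by (cases C; cases D) (simp_all add: c2A_NN c2A_NS c2A_SN c2A_SS)

lemma dA: "x \<in> U \<Longrightarrow> tconn Gam a C D differentiable (at x)"
  using c2A by (auto simp: c2_def dU_def)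
lemma dpA: "x \<in> U \<Longrightarrow> partial i (tconn Gam a C D) differentiable (at x)"
  using c2A by (auto simp: c2_def dU_def)
lemma dtr: "x \<in> U \<Longrightarrow> trGam Gam a differentiable (at x)"
  using c2tr by (auto simp: c2_def dU_def)

lemma dUR: "dU U (tcurv Gam a b C D)"
  unfolding tcurv_fun
  by (intro dU_add dU_diff dU_sum dU_mult c2_dU_partial c2_dU c2A)
lemma dR: "x \<in> U \<Longrightarrow> tcurv Gam a b C D differentiable (at x)"
  using dUR by (auto simp: dU_def)

lemma sw_A: "x \<in> U \<Longrightarrow> partial i (partial j (tconn Gam a C D)) x = partial j (partial i (tconn Gam a C D)) x"
  using c2A by (auto simp: c2_def)

lemma sm_T: "smooth_fun_on U (T C D)" using par by (simp add: parallel_adjoint_def)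
lemma c2T: "c2 U (T C D)" using smooth_c2[OF opn sm_T] .
lemma dT: "x \<in> U \<Longrightarrow> T C D differentiable (at x)" using c2T by (auto simp: c2_def dU_def)
lemma parT: "x \<in> U \<Longrightarrow> partial a (T C D) x
        + (\<Sum>E\<in>UNIV. tconn Gam a C E x * T E D x - T C E x * tconn Gam a E D x) = 0"
  using par by (simp add: parallel_adjoint_def)

lemma partial_negdiv:
  fixes f :: "real^'m::finite \<Rightarrow> real"
  assumes "f differentiable (at x)"
  shows "partial i (\<lambda>y. - (f y / c)) x = - (partial i f x / c)"
  using partial_cmult[OF assms, of i "-1/c"] by simp

lemma ric_expand: "ric Gam b d x = (\<Sum>a\<in>UNIV. partial a (Gam a b d) x) - (\<Sum>a\<in>UNIV. partial b (Gam a a d) x)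
   + (\<Sum>a\<in>UNIV. \<Sum>e\<in>UNIV. Gam a a e x * Gam e b d x) - (\<Sum>a\<in>UNIV. \<Sum>e\<in>UNIV. Gam a b e x * Gam e a d x)"
  by (simp add: ric_def riem_def sum.distrib sum_subtractf)

lemma ptr: "x \<in> U \<Longrightarrow> partial i (trGam Gam b) x = (\<Sum>a\<in>UNIV. partial i (Gam a a b) x)"
  unfolding trGam_fun by (rule partial_sum) (simp add: dG)

lemma ric_antisym:
  assumes x: "x \<in> U"
  shows "ric Gam b d x - ric Gam d b x = partial d (trGam Gam b) x - partial b (trGam Gam d) x"
proof -
  have p1: "partial a (Gam a b d) x = partial a (Gam a d b) x" for a
    by (rule partial_local[OF opn x]) (simp add: symG)
  have q1: "(\<Sum>a\<in>UNIV. \<Sum>e\<in>UNIV. Gam a a e x * Gam e b d x) = (\<Sum>a\<in>UNIV. \<Sum>e\<in>UNIV. Gam a a e x * Gam e d b x)"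
    using symG x by simp
  have "(\<Sum>a\<in>UNIV. \<Sum>e\<in>UNIV. Gam a d e x * Gam e a b x) = (\<Sum>e\<in>UNIV. \<Sum>a\<in>UNIV. Gam a d e x * Gam e a b x)"
    by (rule sum.swap)
  also have "\<dots> = (\<Sum>a\<in>UNIV. \<Sum>e\<in>UNIV. Gam a b e x * Gam e a d x)"
    using symG x by (simp add: mult.commute)
  finally have q2: "(\<Sum>a\<in>UNIV. \<Sum>e\<in>UNIV. Gam a d e x * Gam e a b x) = (\<Sum>a\<in>UNIV. \<Sum>e\<in>UNIV. Gam a b e x * Gam e a d x)" .
  show ?thesis
    by (simp add: ric_expand ptr[OF x] p1 q1 q2 sum_subtractf)
qed

lemma sch_aux:
  fixes n p q :: real assumes "n \<noteq> 0" "n + 2 \<noteq> 0"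
  shows "((n+1)*p+q)/(n*(n+2)) - ((n+1)*q+p)/(n*(n+2)) = (p - q)/(n+2)"
proof -
  have "((n+1)*p+q)/(n*(n+2)) - ((n+1)*q+p)/(n*(n+2)) = (n*(p-q))/(n*(n+2))"
    by (simp add: diff_divide_distrib[symmetric] algebra_simps)
  also have "\<dots> = (p - q)/(n+2)" using assms by simp
  finally show ?thesis .
qed

lemma sch_antisym:
  shows "schouten Gam a b x - schouten Gam b a x = (ric Gam a b x - ric Gam b a x) / (dimn TYPE('n) + 2)"
  unfolding schouten_def by (rule sch_aux[OF nn_ne0 nn2_ne0])


lemma if0_mult: "(if P then y else 0) * (z::real) = (if P then y * z else 0)"
  "z * (if P then y else 0) = (if P then z * y else 0)" by auto

lemma pA_SS: assumes x: "x \<in> U"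
  shows "partial i (tconn Gam a (Some b) (Some c)) x = partial i (Gam b a c) x
     - (if b = c then partial i (trGam Gam a) x / (dimn TYPE('n) + 2) else 0)"
proof -
  have dk: "(\<lambda>y. trGam Gam a y / (dimn TYPE('n) + 2)) differentiable (at x)"
    using dtr[OF x] by (simp add: divide_inverse)
  show ?thesis
    by (cases "b = c") (simp_all add: tconn_SS_fun partial_diff partial_divc dG[OF x] dtr[OF x] dk partial_const)
qed

lemma nP_aux:
  fixes n p q :: real assumes "n \<noteq> 0" "n + 2 \<noteq> 0"
  shows "n * (((n+1)*p+q)/(n*(n+2))) = p - (p - q)/(n+2)"
proof -
  have "n * (((n+1)*p+q)/(n*(n+2))) = ((n+1)*p+q)/(n+2)" using assms by simp
  also have "\<dots> = ((n+2)*p - (p - q))/(n+2)" by (simp add: algebra_simps)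
  also have "\<dots> = p - (p - q)/(n+2)" using assms by (simp add: diff_divide_distrib)
  finally show ?thesis .
qed

lemma nP: "dimn TYPE('n) * schouten Gam a d x = ric Gam a d x - (ric Gam a d x - ric Gam d a x) / (dimn TYPE('n) + 2)"
  unfolding schouten_def by (rule nP_aux[OF nn_ne0 nn2_ne0])

lemma N_i: assumes x: "x \<in> U"
  shows "(\<Sum>c\<in>UNIV. partial c (tconn Gam a (Some c) (Some d)) x)
     = (\<Sum>c\<in>UNIV. partial c (Gam c a d) x) - partial d (trGam Gam a) x / (dimn TYPE('n) + 2)"
  by (simp add: pA_SS[OF x] sum_subtractf)

lemma N_ii: assumes x: "x \<in> U"
  shows "(\<Sum>c\<in>UNIV. partial a (tconn Gam c (Some c) (Some d)) x)
     = partial a (trGam Gam d) x - partial a (trGam Gam d) x / (dimn TYPE('n) + 2)"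
  by (simp add: pA_SS[OF x] sum_subtractf ptr[OF x])

lemma N_iii: assumes x: "x \<in> U"
  shows "(\<Sum>c\<in>UNIV. \<Sum>E\<in>UNIV. tconn Gam c (Some c) E x * tconn Gam a E (Some d) x
            - tconn Gam a (Some c) E x * tconn Gam c E (Some d) x)
     = (\<Sum>c\<in>UNIV. \<Sum>e\<in>UNIV. Gam c c e x * Gam e a d x) - (\<Sum>c\<in>UNIV. \<Sum>e\<in>UNIV. Gam c a e x * Gam e c d x)
       - dimn TYPE('n) * schouten Gam a d x"
  using card_nn
  by (simp add: sum_option tconn_SS tconn_SN tconn_NN tconn_NS if01_mult if0_mult sum.distrib sum_subtractf
     right_diff_distrib left_diff_distrib trGam_def algebra_simps)

lemma RX: assumes x: "x \<in> U" shows "tcurv Gam a b C None x = 0"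
proof (cases C)
  case (Some c)
  show ?thesis using assms symG unfolding Some tcurv_def
    by (simp add: sum_option tconn_SS tconn_SN tconn_NN tconn_SN_fun partial_const if01_mult sum.distrib sum_subtractf right_diff_distrib left_diff_distrib)
next
  case None
  have "tcurv Gam a b None None x = - (partial a (trGam Gam b) x / (dimn TYPE('n) + 2))
     + (partial b (trGam Gam a) x / (dimn TYPE('n) + 2)) - (schouten Gam a b x - schouten Gam b a x)"
    unfolding tcurv_def tconn_NN_fun
    by (simp add: partial_negdiv dtr[OF x] sum_option tconn_SS tconn_SN tconn_NN tconn_NS if01_mult sum.distrib sum_subtractf right_diff_distrib left_diff_distrib)
  also have "\<dots> = 0"
    by (simp add: sch_antisym ric_antisym[OF x] diff_divide_distrib)
  finally show ?thesis using None by simp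
qed

lemma Nrm_aux:
  fixes S1 Q1 Q2 A B Rad Rda k :: real
  assumes "Rad - Rda = B - A" "Rad = S1 - A + Q1 - Q2"
  shows "S1 - B/k - (A - A/k) + (Q1 - Q2 - (Rad - (Rad - Rda)/k)) = 0"
proof -
  have "(Rad - Rda)/k = B/k - A/k" using assms(1) by (simp add: diff_divide_distrib)
  then show ?thesis using assms(2) by linarith
qed

lemma Nrm: assumes x: "x \<in> U" shows "(\<Sum>c\<in>UNIV. tcurv Gam c a (Some c) D x) = 0"
proof (cases D)
  case None then show ?thesis by (simp add: RX[OF x])
next
  case (Some d)
  let ?k = "dimn TYPE('n) + 2"
  have "(\<Sum>c\<in>UNIV. tcurv Gam c a (Some c) (Some d) x)
     = (\<Sum>c\<in>UNIV. partial c (tconn Gam a (Some c) (Some d)) x)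
       - (\<Sum>c\<in>UNIV. partial a (tconn Gam c (Some c) (Some d)) x)
       + (\<Sum>c\<in>UNIV. \<Sum>E\<in>UNIV. tconn Gam c (Some c) E x * tconn Gam a E (Some d) x
            - tconn Gam a (Some c) E x * tconn Gam c E (Some d) x)"
    unfolding tcurv_def by (simp add: sum.distrib sum_subtractf)
  also have "\<dots> = (\<Sum>c\<in>UNIV. partial c (Gam c a d) x) - partial d (trGam Gam a) x / ?k
     - (partial a (trGam Gam d) x - partial a (trGam Gam d) x / ?k)
     + ((\<Sum>c\<in>UNIV. \<Sum>e\<in>UNIV. Gam c c e x * Gam e a d x) - (\<Sum>c\<in>UNIV. \<Sum>e\<in>UNIV. Gam c a e x * Gam e c d x)
       - (ric Gam a d x - (ric Gam a d x - ric Gam d a x) / ?k))"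
    by (simp only: N_i[OF x] N_ii[OF x] N_iii[OF x] nP)
  also have "\<dots> = 0"
  proof (rule Nrm_aux)
    show "ric Gam a d x - ric Gam d a x = partial d (trGam Gam a) x - partial a (trGam Gam d) x"
      by (rule ric_antisym[OF x])
    show "ric Gam a d x = (\<Sum>c\<in>UNIV. partial c (Gam c a d) x) - partial a (trGam Gam d) x
      + (\<Sum>c\<in>UNIV. \<Sum>e\<in>UNIV. Gam c c e x * Gam e a d x) - (\<Sum>c\<in>UNIV. \<Sum>e\<in>UNIV. Gam c a e x * Gam e c d x)"
      by (simp add: ric_expand ptr[OF x])
  qed
  finally show ?thesis using Some by simp
qed

end



definition mm :: "('a::finite \<Rightarrow> 'a \<Rightarrow> real) \<Rightarrow> ('a \<Rightarrow> 'a \<Rightarrow> real) \<Rightarrow> 'a \<Rightarrow> 'a \<Rightarrow> real" where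
  "mm M N i j = (\<Sum>k\<in>UNIV. M i k * N k j)"
definition mv :: "('a::finite \<Rightarrow> 'a \<Rightarrow> real) \<Rightarrow> ('a \<Rightarrow> real) \<Rightarrow> 'a \<Rightarrow> real" where
  "mv M v i = (\<Sum>k\<in>UNIV. M i k * v k)"
definition colN :: "('n option \<Rightarrow> 'n option \<Rightarrow> real) \<Rightarrow> 'n option \<Rightarrow> real" where
  "colN M i = M i None"

lemma mv_mm: "mv (mm M N) v i = mv M (mv N v) i"
proof -
  have "mv (mm M N) v i = (\<Sum>k\<in>UNIV. \<Sum>l\<in>UNIV. M i l * N l k * v k)"
    by (simp add: mv_def mm_def sum_distrib_right)
  also have "\<dots> = (\<Sum>l\<in>UNIV. \<Sum>k\<in>UNIV. M i l * N l k * v k)" by (rule sum.swap)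
  also have "\<dots> = mv M (mv N v) i" by (simp add: mv_def sum_distrib_left mult.assoc)
  finally show ?thesis .
qed

lemma mm_assoc: "mm (mm M N) P i j = mm M (mm N P) i j"
proof -
  have "mm (mm M N) P i j = (\<Sum>k\<in>UNIV. \<Sum>l\<in>UNIV. M i l * N l k * P k j)"
    by (simp add: mm_def sum_distrib_right)
  also have "\<dots> = (\<Sum>l\<in>UNIV. \<Sum>k\<in>UNIV. M i l * N l k * P k j)" by (rule sum.swap)
  also have "\<dots> = mm M (mm N P) i j" by (simp add: mm_def sum_distrib_left mult.assoc)
  finally show ?thesis .
qed

lemma colN_mm: "colN (mm M N) = mv M (colN N)"
  by (rule ext) (simp add: colN_def mm_def mv_def)

lemma mv_add_left: "mv (\<lambda>i j. M i j + N i j) v k = mv M v k + mv N v k"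
  by (simp add: mv_def sum.distrib distrib_right)
lemma mv_diff_left: "mv (\<lambda>i j. M i j - N i j) v k = mv M v k - mv N v k"
  by (simp add: mv_def sum_subtractf left_diff_distrib)
lemma mv_add_right: "mv M (\<lambda>i. v i + w i) k = mv M v k + mv M w k"
  by (simp add: mv_def sum.distrib distrib_left)
lemma mv_diff_right: "mv M (\<lambda>i. v i - w i) k = mv M v k - mv M w k"
  by (simp add: mv_def sum_subtractf right_diff_distrib)
lemma mm_add_left: "mm (\<lambda>i j. M i j + N i j) P k l = mm M P k l + mm N P k l"
  by (simp add: mm_def sum.distrib distrib_right)
lemma mm_diff_left: "mm (\<lambda>i j. M i j - N i j) P k l = mm M P k l - mm N P k l"
  by (simp add: mm_def sum_subtractf left_diff_distrib)
lemma mm_add_right: "mm P (\<lambda>i j. M i j + N i j) k l = mm P M k l + mm P N k l"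
  by (simp add: mm_def sum.distrib distrib_left)
lemma mm_diff_right: "mm P (\<lambda>i j. M i j - N i j) k l = mm P M k l - mm P N k l"
  by (simp add: mm_def sum_subtractf right_diff_distrib)
lemma mv_zero_right: "mv M (\<lambda>i. 0) k = 0"
  by (simp add: mv_def)

context proj begin

definition "Ax x a = (\<lambda>E F. tconn Gam a E F x)"
definition "pAx x c a = (\<lambda>E F. partial c (tconn Gam a E F) x)"
definition "Tx x = (\<lambda>E F. T E F x)"
definition "pTx x c = (\<lambda>E F. partial c (T E F) x)"
definition "vx x = (\<lambda>E. T E None x)"
definition "Rx x a b = (\<lambda>E F. tcurv Gam a b E F x)"

lemma Rx_eq: "Rx x a b = (\<lambda>E F. pAx x a b E F - pAx x b a E F + (mm (Ax x a) (Ax x b) E F - mm (Ax x b) (Ax x a) E F))"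
  by (rule ext)+ (simp add: Rx_def pAx_def Ax_def mm_def tcurv_def sum_subtractf)

lemma pT_eq: assumes x: "x \<in> U"
  shows "pTx x c = (\<lambda>E F. mm (Tx x) (Ax x c) E F - mm (Ax x c) (Tx x) E F)"
proof (rule ext, rule ext)
  fix E F
  have "partial c (T E F) x + (\<Sum>G\<in>UNIV. tconn Gam c E G x * T G F x - T E G x * tconn Gam c G F x) = 0"
    by (rule parT[OF x])
  then show "pTx x c E F = mm (Tx x) (Ax x c) E F - mm (Ax x c) (Tx x) E F"
    by (simp add: pTx_def mm_def Tx_def Ax_def sum_subtractf)
qed

lemma colN_R0: assumes x: "x \<in> U" shows "colN (Rx x a b) = (\<lambda>E. 0)"
  by (rule ext) (simp add: colN_def Rx_def RX[OF x])

lemma V2: assumes x: "x \<in> U" shows "mv (Rx x a b) (vx x) C = 0"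
proof -
  have w: "partial b (T C None) y = (\<Sum>E\<in>UNIV. T C E y * tconn Gam b E None y - tconn Gam b C E y * T E None y)"
    if "y \<in> U" for b C y
  proof -
    have "partial b (T C None) y + (\<Sum>E\<in>UNIV. tconn Gam b C E y * T E None y - T C E y * tconn Gam b E None y) = 0"
      by (rule parT[OF that])
    then show ?thesis by (simp add: sum_subtractf)
  qed
  have D: "partial a (partial b (T C None)) x =
      mv (pTx x a) (colN (Ax x b)) C + mv (Tx x) (colN (pAx x a b)) C - mv (pAx x a b) (vx x) C
      - mv (Ax x b) (colN (pTx x a)) C" for a b
  proof -
    have "partial a (partial b (T C None)) x
       = partial a (\<lambda>y. \<Sum>E\<in>UNIV. T C E y * tconn Gam b E None y - tconn Gam b C E y * T E None y) x"
      by (rule partial_local[OF opn x]) (simp add: w)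
    also have "\<dots> = (\<Sum>E\<in>UNIV. partial a (T C E) x * tconn Gam b E None x + T C E x * partial a (tconn Gam b E None) x
        - (partial a (tconn Gam b C E) x * T E None x + tconn Gam b C E x * partial a (T E None) x))"
      by (simp add: partial_sum partial_diff partial_mult dT[OF x] dA[OF x])
    also have "\<dots> = mv (pTx x a) (colN (Ax x b)) C + mv (Tx x) (colN (pAx x a b)) C - mv (pAx x a b) (vx x) C
      - mv (Ax x b) (colN (pTx x a)) C"
      by (simp add: mv_def colN_def pTx_def Ax_def Tx_def pAx_def vx_def sum.distrib sum_subtractf)
    finally show ?thesis .
  qed
  have sw: "partial a (partial b (T C None)) x = partial b (partial a (T C None)) x"
    using c2T x by (auto simp: c2_def)
  have cN: "colN (pTx x c) = (\<lambda>E. mv (Tx x) (colN (Ax x c)) E - mv (Ax x c) (vx x) E)" for c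
    by (rule ext) (simp add: pT_eq[OF x] colN_def mm_def mv_def vx_def Tx_def)
  have TRX: "mv (Tx x) (colN (Rx x a b)) C = 0"
    by (simp add: colN_R0[OF x] mv_zero_right)
  have TRX2: "mv (Tx x) (colN (Rx x a b)) C = mv (Tx x) (colN (pAx x a b)) C - mv (Tx x) (colN (pAx x b a)) C
      + (mv (Tx x) (mv (Ax x a) (colN (Ax x b))) C - mv (Tx x) (mv (Ax x b) (colN (Ax x a))) C)"
  proof -
    have "colN (Rx x a b) = (\<lambda>E. colN (pAx x a b) E - colN (pAx x b a) E + (mv (Ax x a) (colN (Ax x b)) E - mv (Ax x b) (colN (Ax x a)) E))"
      by (rule ext) (simp add: Rx_eq colN_def colN_mm[symmetric] mm_def)
    then show ?thesis by (simp add: mv_add_right mv_diff_right)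
  qed
  have Rv: "mv (Rx x a b) (vx x) C = mv (pAx x a b) (vx x) C - mv (pAx x b a) (vx x) C
      + (mv (Ax x a) (mv (Ax x b) (vx x)) C - mv (Ax x b) (mv (Ax x a) (vx x)) C)"
    by (simp add: Rx_eq mv_add_left mv_diff_left mv_mm)
  show ?thesis
    using D[of a b, unfolded cN] D[of b a, unfolded cN] sw TRX TRX2 Rv
    by (simp add: pT_eq[OF x] cN mv_diff_left mv_diff_right mv_mm)
qed

end



lemma sum_mv_diag: "(\<Sum>c\<in>UNIV. mv (M c) w (Some c)) = (\<Sum>D\<in>UNIV. (\<Sum>c\<in>UNIV. M c (Some c) D) * w D)"
proof -
  have "(\<Sum>c\<in>UNIV. mv (M c) w (Some c)) = (\<Sum>c\<in>UNIV. \<Sum>D\<in>UNIV. M c (Some c) D * w D)"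
    by (simp add: mv_def)
  also have "\<dots> = (\<Sum>D\<in>UNIV. \<Sum>c\<in>UNIV. M c (Some c) D * w D)" by (rule sum.swap)
  also have "\<dots> = (\<Sum>D\<in>UNIV. (\<Sum>c\<in>UNIV. M c (Some c) D) * w D)" by (simp add: sum_distrib_right)
  finally show ?thesis .
qed

lemma mv_scale_right: "mv M (\<lambda>i. s * v i) k = s * mv M v k"
  by (simp add: mv_def sum_distrib_left algebra_simps)

context proj begin

definition "pRx x c a b = (\<lambda>E F. partial c (tcurv Gam a b E F) x)"
definition "ppAx x c a b = (\<lambda>E F. partial c (partial a (tconn Gam b E F)) x)"
definition "DR x c a b = (\<lambda>E F. pRx x c a b E F + mm (Ax x c) (Rx x a b) E F - mm (Rx x a b) (Ax x c) E F)"

lemma pR_eq: assumes x: "x \<in> U"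
  shows "pRx x c a b E F = ppAx x c a b E F - ppAx x c b a E F
     + (mm (pAx x c a) (Ax x b) E F + mm (Ax x a) (pAx x c b) E F
       - (mm (pAx x c b) (Ax x a) E F + mm (Ax x b) (pAx x c a) E F))"
proof -
  have "pRx x c a b E F = partial c (partial a (tconn Gam b E F)) x - partial c (partial b (tconn Gam a E F)) x
     + (\<Sum>G\<in>UNIV. partial c (tconn Gam a E G) x * tconn Gam b G F x + tconn Gam a E G x * partial c (tconn Gam b G F) x
        - (partial c (tconn Gam b E G) x * tconn Gam a G F x + tconn Gam b E G x * partial c (tconn Gam a G F) x))"
    unfolding pRx_def tcurv_fun
    by (simp add: partial_add partial_diff partial_sum partial_mult dpA[OF x] dA[OF x])
  then show ?thesis
    by (simp add: ppAx_def mm_def pAx_def Ax_def sum.distrib sum_subtractf)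
qed

lemma bianchi: assumes x: "x \<in> U"
  shows "DR x c a b E F + DR x a b c E F + DR x b c a E F = 0"
proof -
  have s1: "ppAx x c a b E F = ppAx x a c b E F" for a b c
    unfolding ppAx_def by (rule sw_A[OF x])
  show ?thesis
    using s1[of c a b] s1[of c b a] s1[of a b c]
    by (simp add: DR_def pR_eq[OF x] Rx_eq mm_add_left mm_diff_left mm_add_right mm_diff_right mm_assoc)
qed

end



context proj begin

lemma tcurv_anti: "tcurv Gam a b C D x = - tcurv Gam b a C D x"
  by (simp add: tcurv_def sum_subtractf)

lemma Nrm2: assumes x: "x \<in> U" shows "(\<Sum>c\<in>UNIV. tcurv Gam b c (Some c) D x) = 0"
proof -
  have "(\<Sum>c\<in>UNIV. tcurv Gam b c (Some c) D x) = - (\<Sum>c\<in>UNIV. tcurv Gam c b (Some c) D x)"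
    by (subst tcurv_anti) (simp add: sum_negf)
  then show ?thesis using Nrm[OF x] by simp
qed

lemma V2fun: assumes x: "x \<in> U" shows "mv (Rx x a b) (vx x) = (\<lambda>C. 0)"
  by (rule ext) (rule V2[OF x])

lemma sumR1: assumes x: "x \<in> U" shows "(\<Sum>c\<in>UNIV. mv (Rx x b c) w (Some c)) = 0"
  by (simp add: sum_mv_diag Rx_def Nrm2[OF x])
lemma sumR2: assumes x: "x \<in> U" shows "(\<Sum>c\<in>UNIV. mv (Rx x c a) w (Some c)) = 0"
  by (simp add: sum_mv_diag Rx_def Nrm[OF x])

lemma sumpR1: assumes x: "x \<in> U" shows "(\<Sum>c\<in>UNIV. mv (pRx x a b c) w (Some c)) = 0"
proof -
  have "(\<Sum>c\<in>UNIV. partial a (tcurv Gam b c (Some c) D) x) = 0" for D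
  proof -
    have "(\<Sum>c\<in>UNIV. partial a (tcurv Gam b c (Some c) D) x) = partial a (\<lambda>y. \<Sum>c\<in>UNIV. tcurv Gam b c (Some c) D y) x"
      by (rule partial_sum[symmetric]) (simp add: dR[OF x])
    also have "\<dots> = partial a (\<lambda>y. 0) x"
      by (rule partial_local[OF opn x]) (simp add: Nrm2)
    finally show ?thesis by (simp add: partial_const)
  qed
  then show ?thesis by (simp add: sum_mv_diag pRx_def)
qed
lemma sumpR2: assumes x: "x \<in> U" shows "(\<Sum>c\<in>UNIV. mv (pRx x b c a) w (Some c)) = 0"
proof -
  have "(\<Sum>c\<in>UNIV. partial b (tcurv Gam c a (Some c) D) x) = 0" for D
  proof -
    have "(\<Sum>c\<in>UNIV. partial b (tcurv Gam c a (Some c) D) x) = partial b (\<lambda>y. \<Sum>c\<in>UNIV. tcurv Gam c a (Some c) D y) x"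
      by (rule partial_sum[symmetric]) (simp add: dR[OF x])
    also have "\<dots> = partial b (\<lambda>y. 0) x"
      by (rule partial_local[OF opn x]) (simp add: Nrm)
    finally show ?thesis by (simp add: partial_const)
  qed
  then show ?thesis by (simp add: sum_mv_diag pRx_def)
qed

lemma mv_DR: "mv (DR x c a b) w k = mv (pRx x c a b) w k + mv (Ax x c) (mv (Rx x a b) w) k - mv (Rx x a b) (mv (Ax x c) w) k"
  by (simp add: DR_def mv_add_left mv_diff_left mv_mm)

lemma term_c: assumes x: "x \<in> U"
  shows "(\<Sum>D\<in>UNIV. tcurv Gam a b (Some c) D x * T D (Some c) x) = - mv (DR x c a b) (vx x) (Some c)"
proof -
  have k0: "dimn TYPE('n) + 2 \<noteq> 0" by (rule nn2_ne0)
  have F2: "(\<lambda>D. T D (Some c) x) = (\<lambda>D. mv (Tx x) (colN (Ax x c)) D + trGam Gam c x / (dimn TYPE('n) + 2) * vx x D)"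
    by (rule ext) (simp add: mv_def colN_def Ax_def Tx_def vx_def sum_option tconn_SN tconn_NN if01_mult)
  have cN: "mv (Tx x) (colN (Ax x c)) = (\<lambda>E. colN (pTx x c) E + mv (Ax x c) (vx x) E)"
    by (rule ext) (simp add: pT_eq[OF x] colN_def mm_def mv_def vx_def Tx_def)
  have F4: "mv (pRx x c a b) (vx x) C + mv (Rx x a b) (colN (pTx x c)) C = 0" for C
  proof -
    have "partial c (\<lambda>y. \<Sum>D\<in>UNIV. tcurv Gam a b C D y * T D None y) x = partial c (\<lambda>y. 0) x"
      by (rule partial_local[OF opn x]) (use V2 in \<open>simp add: mv_def Rx_def vx_def\<close>)
    moreover have "partial c (\<lambda>y. \<Sum>D\<in>UNIV. tcurv Gam a b C D y * T D None y) x
        = mv (pRx x c a b) (vx x) C + mv (Rx x a b) (colN (pTx x c)) C"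
      by (simp add: partial_sum partial_mult dR[OF x] dT[OF x] mv_def pRx_def vx_def Rx_def colN_def pTx_def sum.distrib)
    ultimately show ?thesis by (simp add: partial_const)
  qed
  have "(\<Sum>D\<in>UNIV. tcurv Gam a b (Some c) D x * T D (Some c) x) = mv (Rx x a b) (\<lambda>D. T D (Some c) x) (Some c)"
    by (simp add: mv_def Rx_def)
  also have "\<dots> = mv (Rx x a b) (mv (Tx x) (colN (Ax x c))) (Some c)"
    unfolding F2 mv_add_right mv_scale_right V2[OF x] by simp
  also have "\<dots> = mv (Rx x a b) (colN (pTx x c)) (Some c) + mv (Rx x a b) (mv (Ax x c) (vx x)) (Some c)"
    by (simp add: cN mv_add_right)
  also have "\<dots> = - mv (DR x c a b) (vx x) (Some c)"
    using F4[of "Some c"] by (simp add: mv_DR V2fun[OF x] mv_zero_right)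
  finally show ?thesis .
qed

lemma main: assumes x: "x \<in> U"
  shows "(\<Sum>C\<in>UNIV. \<Sum>D\<in>UNIV. tcurv Gam a b C D x * T D C x) = 0"
proof -
  have N: "(\<Sum>D\<in>UNIV. tcurv Gam a b None D x * T D None x) = 0"
    using V2[OF x, of a b None] by (simp add: mv_def Rx_def vx_def)
  have "(\<Sum>C\<in>UNIV. \<Sum>D\<in>UNIV. tcurv Gam a b C D x * T D C x)
      = (\<Sum>c\<in>UNIV. - mv (DR x c a b) (vx x) (Some c))"
  proof -
    have "(\<Sum>C\<in>UNIV. \<Sum>D\<in>UNIV. tcurv Gam a b C D x * T D C x)
      = (\<Sum>D\<in>UNIV. tcurv Gam a b None D x * T D None x) + (\<Sum>c\<in>UNIV. \<Sum>D\<in>UNIV. tcurv Gam a b (Some c) D x * T D (Some c) x)"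
      by (rule sum_option)
    then show ?thesis by (simp only: N term_c[OF x])
  qed
  also have "\<dots> = (\<Sum>c\<in>UNIV. mv (DR x a b c) (vx x) (Some c)) + (\<Sum>c\<in>UNIV. mv (DR x b c a) (vx x) (Some c))"
  proof -
    have "- mv (DR x c a b) (vx x) (Some c) = mv (DR x a b c) (vx x) (Some c) + mv (DR x b c a) (vx x) (Some c)" for c
    proof -
      have "DR x c a b = (\<lambda>E F. - DR x a b c E F - DR x b c a E F)"
        using bianchi[OF x] by (intro ext) (simp add: eq_neg_iff_add_eq_0 algebra_simps)
      then show ?thesis by (simp add: mv_def sum_subtractf sum_negf algebra_simps sum.distrib)
    qed
    then show ?thesis by (simp add: sum.distrib)
  qed
  also have "\<dots> = 0"
    by (simp add: mv_DR sum.distrib sum_subtractf sumpR1[OF x] sumpR2[OF x] sumR1[OF x] sumR2[OF x]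
        V2fun[OF x] mv_zero_right)
  finally show ?thesis .
qed

end


theorem lemma4p3:
  fixes U :: "(real^'n::finite) set"
    and Gam :: "'n christoffel"
    and T :: "'n option \<Rightarrow> 'n option \<Rightarrow> real^'n \<Rightarrow> real"
  assumes "CARD('n) \<ge> 2"
    and "open U"
    and "\<forall>a b c. smooth_fun_on U (Gam a b c)"
    and "\<forall>a b c. \<forall>x\<in>U. Gam a b c x = Gam a c b x"
    and "parallel_adjoint Gam U T"
  shows "\<forall>x\<in>U. \<forall>a b. (\<Sum>C\<in>UNIV. \<Sum>D\<in>UNIV. tcurv Gam a b C D x * T D C x) = 0"
proof -
  interpret proj U Gam T
    using assms by (unfold_locales) auto
  show ?thesis using main by blast
qed

end
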